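(* Let $P$ be a correct net. (1) Free weakening: if $P$ has a free weakening $l$ then $\mathcal L(P) \setminus \{l\}$ is a subnet of $P$. (2) Root abstraction: if the root link $l$ of $P$ is a ⅋-link (par-link) then $\mathcal L(P) \setminus \{l\}$ is a subnet of $P$. (3) Free substitution: if $P$ has a free substitution $l$ then $\mathcal L(P) \setminus (\{l\} \cup \mathrm{ibox}(l))$ is a subnet of $P$. (4) Root application with free argument: if the root link $l$ of $P$ is a $\otimes$-link whose argument is a free $!$-link $h$ then $\mathcal L(P) \setminus (\{l,h\} \cup \mathrm{ibox}(h))$ is a subnet of $P$.
   Context: Nets are directed labelled hyper-graphs with nodes typed ${\mathtt e}$ (exponential) or ${\mathtt m}$ (multiplicative) and links labelled by $!$, ${\mathsf d}$ (dereliction), ${\mathsf w}$ (weakening), ⅋ (par), $\otimes$, $[\cdot]$ (context hole), ${\tt genax}$; $\mathcal L(P)$ denotes the set of links of $P$. Contraction is represented by an ${\mathtt e}$-node with several incoming ${\mathsf d}$-links. The root of $P$ is its unique terminal ${\mathtt m}$-node and the root link is the link whose target is the root; the free variables of $P$ are its terminal ${\mathtt e}$-nodes. Each $!$-link $l$ has a box with interior $\mathrm{ibox}(l)$ (a set of links not containing $l$, itself a (pre-)net whose root is the ${\mathtt m}$-source of $l$; its free variables are not targets of weakenings). A net is correct if the root is the only terminal ${\mathtt m}$-node of its correction net (obtained by collapsing each level-0 box into a ${\tt genax}$-link with the same interface), the correction net is acyclic, and the boxes at level 0 are correct. A free weakening is a weakening whose ${\mathtt e}$-node is a free variable of $P$.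 A $!$-link $l$ is free if it is at level 0 (not inside any box) and its free variables (those of its box) are free variables of $P$; it is an argument if its ${\mathtt e}$-node is the target of a $\otimes$-link; it is a substitution if its ${\mathtt e}$-node is the target of a ${\mathsf w}$-, ${\mathsf d}$- or $[\cdot]$-link. A subnet $Q$ of a correct net $P$ is a subset of its links that is a correct net (with the box function inherited from $P$) and is closed under: contractions (every link of $P$ whose target is an internal ${\mathtt e}$-node of $Q$ is in $Q$); box interiors ($\mathrm{ibox}(h) \subseteq Q$ for every $!$-link $h \in Q$); box free variables ($\mathrm{ibox}(l) \subseteq Q$ whenever a free variable of $\mathrm{ibox}(l)$ is internal to $Q$). *)

theory Defs
  imports Main
begin

text \<open>Node types: exponential (e) and multiplicative (m).\<close>
datatype ntype = Ety | Mty

datatype label = Bang | Der | Weak | Par | Tens | Hole | Genax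

text \<open>A (pre-)net is a set of links of this structure; sub-(pre)nets inherit
  everything, in particular the box function.\<close>
record ('n, 'l) hg =
  ntyp  :: "'n \<Rightarrow> ntype"
  lab  :: "'l \<Rightarrow> label"
  src  :: "'l \<Rightarrow> 'n list"
  tgt  :: "'l \<Rightarrow> 'n list"
  ibox :: "'l \<Rightarrow> 'l set"

definition nodes :: "('n,'l) hg \<Rightarrow> 'l set \<Rightarrow> 'n set" where
  "nodes G S = (\<Union>l\<in>S. set (src G l) \<union> set (tgt G l))"

definition sources :: "('n,'l) hg \<Rightarrow> 'l set \<Rightarrow> 'n set" where
  "sources G S = (\<Union>l\<in>S. set (src G l))"

definition terminal :: "('n,'l) hg \<Rightarrow> 'l set \<Rightarrow> 'n set" where
  "terminal G S = nodes G S - sources G S"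

definition internal :: "('n,'l) hg \<Rightarrow> 'l set \<Rightarrow> 'n set" where
  "internal G S = nodes G S - terminal G S"

definition fv :: "('n,'l) hg \<Rightarrow> 'l set \<Rightarrow> 'n set" where
  "fv G S = {v \<in> terminal G S. ntyp G v = Ety}"

definition term_m :: "('n,'l) hg \<Rightarrow> 'l set \<Rightarrow> 'n set" where
  "term_m G S = {v \<in> terminal G S. ntyp G v = Mty}"

definition root :: "('n,'l) hg \<Rightarrow> 'l set \<Rightarrow> 'n" where
  "root G S = (THE v. v \<in> term_m G S)"

text \<open>Signature of each label (sources, targets).
  par: sources [x (e, bound variable), b (m, body)], target [r (m)];
  tensor: source [f (m, function)], targets [r (m, result), a (e, argument)];
  d: no source, targets [r (m, occurrence), x (e, variable)];
  w: no source, target [x (e)];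
  !: sources [r (m, box root), x (e)], no target;
  hole: no source, targets r (m) followed by e-nodes;
  genax: e-nodes only.\<close>
fun sig_ok :: "('n \<Rightarrow> ntype) \<Rightarrow> label \<Rightarrow> 'n list \<Rightarrow> 'n list \<Rightarrow> bool" where
  "sig_ok ty Par s t = (\<exists>x b r. s = [x, b] \<and> t = [r] \<and> ty x = Ety \<and> ty b = Mty \<and> ty r = Mty)"
| "sig_ok ty Tens s t = (\<exists>f r a. s = [f] \<and> t = [r, a] \<and> ty f = Mty \<and> ty r = Mty \<and> ty a = Ety)"
| "sig_ok ty Der s t = (\<exists>r x. s = [] \<and> t = [r, x] \<and> ty r = Mty \<and> ty x = Ety)"
| "sig_ok ty Weak s t = (\<exists>x. s = [] \<and> t = [x] \<and> ty x = Ety)"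
| "sig_ok ty Bang s t = (\<exists>r x. s = [r, x] \<and> t = [] \<and> ty r = Mty \<and> ty x = Ety)"
| "sig_ok ty Hole s t = (\<exists>r xs. s = [] \<and> t = r # xs \<and> ty r = Mty \<and> (\<forall>x\<in>set xs. ty x = Ety))"
| "sig_ok ty Genax s t = ((\<forall>x\<in>set s. ty x = Ety) \<and> (\<forall>x\<in>set t. ty x = Ety))"

definition link_ok :: "('n,'l) hg \<Rightarrow> 'l \<Rightarrow> bool" where
  "link_ok G l = (sig_ok (ntyp G) (lab G l) (src G l) (tgt G l) \<and> distinct (src G l @ tgt G l))"

definition bang_root :: "('n,'l) hg \<Rightarrow> 'l \<Rightarrow> 'n" where
  "bang_root G l = src G l ! 0"
definition bang_enode :: "('n,'l) hg \<Rightarrow> 'l \<Rightarrow> 'n" where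
  "bang_enode G l = src G l ! 1"
definition weak_enode :: "('n,'l) hg \<Rightarrow> 'l \<Rightarrow> 'n" where
  "weak_enode G l = tgt G l ! 0"
definition tens_enode :: "('n,'l) hg \<Rightarrow> 'l \<Rightarrow> 'n" where
  "tens_enode G l = tgt G l ! 1"

text \<open>Hyper-graph well-formedness of a link set (ignoring boxes):
  every node is the target of some link; every node is the source of at
  most one link; every m-node is the target of exactly one link (contraction
  only on e-nodes); there is a unique terminal m-node (the root).\<close>
definition hg_ok :: "('n,'l) hg \<Rightarrow> 'l set \<Rightarrow> bool" where
  "hg_ok G S =
    (finite S \<and> (\<forall>l\<in>S. link_ok G l) \<and>
     (\<forall>v\<in>nodes G S. \<exists>l\<in>S. v \<in> set (tgt G l)) \<and>
     (\<forall>v l1 l2. l1 \<in> S \<longrightarrow> l2 \<in> S \<longrightarrow> v \<in> set (src G l1) \<longrightarrow> v \<in> set (src G l2) \<longrightarrow> l1 = l2) \<and>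
     (\<forall>v l1 l2. ntyp G v = Mty \<longrightarrow> l1 \<in> S \<longrightarrow> l2 \<in> S \<longrightarrow> v \<in> set (tgt G l1) \<longrightarrow> v \<in> set (tgt G l2) \<longrightarrow> l1 = l2) \<and>
     (\<exists>!v. v \<in> term_m G S))"

definition boxes_nested :: "('n,'l) hg \<Rightarrow> 'l set \<Rightarrow> bool" where
  "boxes_nested G S =
    (\<forall>l\<in>S. \<forall>h\<in>S. lab G l = Bang \<longrightarrow> lab G h = Bang \<longrightarrow>
        (h \<in> ibox G l \<longrightarrow> ibox G h \<subseteq> ibox G l) \<and>
        (ibox G l \<inter> ibox G h \<noteq> {} \<longrightarrow> l = h \<or> l \<in> ibox G h \<or> h \<in> ibox G l))"

inductive prenet :: "('n,'l) hg \<Rightarrow> 'l set \<Rightarrow> bool" for G where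
  "hg_ok G S \<Longrightarrow> boxes_nested G S \<Longrightarrow>
   (\<forall>l\<in>S. lab G l = Bang \<longrightarrow>
      ibox G l \<subseteq> S \<and> l \<notin> ibox G l \<and> prenet G (ibox G l) \<and>
      root G (ibox G l) = bang_root G l \<and>
      (\<forall>w\<in>ibox G l. lab G w = Weak \<longrightarrow> set (tgt G w) \<inter> fv G (ibox G l) = {})) \<Longrightarrow>
   prenet G S"

definition level0 :: "('n,'l) hg \<Rightarrow> 'l set \<Rightarrow> 'l \<Rightarrow> bool" where
  "level0 G S k = (k \<in> S \<and> (\<forall>l\<in>S. lab G l = Bang \<longrightarrow> k \<notin> ibox G l))"

text \<open>The correction net: level-0 links that are not !-links, plus, for each
  level-0 !-link l, a genax-link (replacing l and its box) with the same
  interface: source the e-node of l, targets the free variables of the box.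
  It is represented by its nodes, its source nodes, and the induced
  node-to-node directed edges (source to target of each link).\<close>
definition corr_edges :: "('n,'l) hg \<Rightarrow> 'l set \<Rightarrow> ('n \<times> 'n) set" where
  "corr_edges G S =
     {(u, v). \<exists>k. level0 G S k \<and> lab G k \<noteq> Bang \<and> u \<in> set (src G k) \<and> v \<in> set (tgt G k)} \<union>
     {(u, v). \<exists>l. level0 G S l \<and> lab G l = Bang \<and> u = bang_enode G l \<and> v \<in> fv G (ibox G l)}"

definition corr_nodes :: "('n,'l) hg \<Rightarrow> 'l set \<Rightarrow> 'n set" where
  "corr_nodes G S =
     (\<Union>k\<in>{k. level0 G S k \<and> lab G k \<noteq> Bang}. set (src G k) \<union> set (tgt G k)) \<union>
     (\<Union>l\<in>{l. level0 G S l \<and> lab G l = Bang}. insert (bang_enode G l) (fv G (ibox G l)))"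

definition corr_sources :: "('n,'l) hg \<Rightarrow> 'l set \<Rightarrow> 'n set" where
  "corr_sources G S =
     (\<Union>k\<in>{k. level0 G S k \<and> lab G k \<noteq> Bang}. set (src G k)) \<union>
     {bang_enode G l | l. level0 G S l \<and> lab G l = Bang}"

definition corr_term_m :: "('n,'l) hg \<Rightarrow> 'l set \<Rightarrow> 'n set" where
  "corr_term_m G S = {v \<in> corr_nodes G S - corr_sources G S. ntyp G v = Mty}"

inductive correct :: "('n,'l) hg \<Rightarrow> 'l set \<Rightarrow> bool" for G where
  "prenet G S \<Longrightarrow> corr_term_m G S = {root G S} \<Longrightarrow> acyclic (corr_edges G S) \<Longrightarrow>
   (\<forall>l. level0 G S l \<and> lab G l = Bang \<longrightarrow> correct G (ibox G l)) \<Longrightarrow>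
   correct G S"

definition subnet :: "('n,'l) hg \<Rightarrow> 'l set \<Rightarrow> 'l set \<Rightarrow> bool" where
  "subnet G Q P =
    (Q \<subseteq> P \<and> correct G Q \<and>
     (\<forall>l\<in>P. \<forall>v\<in>set (tgt G l). v \<in> internal G Q \<and> ntyp G v = Ety \<longrightarrow> l \<in> Q) \<and>
     (\<forall>h\<in>Q. lab G h = Bang \<longrightarrow> ibox G h \<subseteq> Q) \<and>
     (\<forall>l\<in>P. lab G l = Bang \<and> fv G (ibox G l) \<inter> internal G Q \<noteq> {} \<longrightarrow> ibox G l \<subseteq> Q))"

definition free_weakening :: "('n,'l) hg \<Rightarrow> 'l set \<Rightarrow> 'l \<Rightarrow> bool" where
  "free_weakening G P l = (l \<in> P \<and> lab G l = Weak \<and> weak_enode G l \<in> fv G P)"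

definition free_bang :: "('n,'l) hg \<Rightarrow> 'l set \<Rightarrow> 'l \<Rightarrow> bool" where
  "free_bang G P l = (level0 G P l \<and> lab G l = Bang \<and> fv G (ibox G l) \<subseteq> fv G P)"

definition is_substitution :: "('n,'l) hg \<Rightarrow> 'l set \<Rightarrow> 'l \<Rightarrow> bool" where
  "is_substitution G P l = (l \<in> P \<and> lab G l = Bang \<and>
     (\<exists>k\<in>P. lab G k \<in> {Weak, Der, Hole} \<and> bang_enode G l \<in> set (tgt G k)))"

definition is_argument :: "('n,'l) hg \<Rightarrow> 'l set \<Rightarrow> 'l \<Rightarrow> bool" where
  "is_argument G P l = (l \<in> P \<and> lab G l = Bang \<and>
     (\<exists>k\<in>P. lab G k = Tens \<and> bang_enode G l \<in> set (tgt G k)))"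

definition root_link :: "('n,'l) hg \<Rightarrow> 'l set \<Rightarrow> 'l \<Rightarrow> bool" where
  "root_link G P l = (l \<in> P \<and> root G P \<in> set (tgt G l))"

end

theory Submission
  imports Defs
begin

lemma correct_prenet: "correct G P \<Longrightarrow> prenet G P"
  by (erule correct.cases) simp

lemma correct_D: "correct G P \<Longrightarrow> corr_term_m G P = {root G P} \<and> acyclic (corr_edges G P) \<and>
   (\<forall>l. level0 G P l \<and> lab G l = Bang \<longrightarrow> correct G (ibox G l))"
  by (erule correct.cases) simp

lemma prenet_hg: "prenet G S \<Longrightarrow> hg_ok G S"
  by (erule prenet.cases) simp

lemma prenet_nested: "prenet G S \<Longrightarrow> boxes_nested G S"
  by (erule prenet.cases) simp

lemma prenet_box: "prenet G S \<Longrightarrow> l \<in> S \<Longrightarrow> lab G l = Bang \<Longrightarrow>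
      ibox G l \<subseteq> S \<and> l \<notin> ibox G l \<and> prenet G (ibox G l) \<and>
      root G (ibox G l) = bang_root G l \<and>
      (\<forall>w\<in>ibox G l. lab G w = Weak \<longrightarrow> set (tgt G w) \<inter> fv G (ibox G l) = {})"
  by (erule prenet.cases) auto

lemma hg_term_m: "hg_ok G S \<Longrightarrow> term_m G S = {root G S}"
  unfolding hg_ok_def root_def
  by (metis (mono_tags, lifting) empty_iff insertI1 is_singletonI' is_singleton_the_elem the_equality)

lemma hg_link_ok: "hg_ok G S \<Longrightarrow> l \<in> S \<Longrightarrow> link_ok G l"
  unfolding hg_ok_def by blast

lemma hg_src_uniq: "hg_ok G S \<Longrightarrow> l1 \<in> S \<Longrightarrow> l2 \<in> S \<Longrightarrow> v \<in> set (src G l1) \<Longrightarrow> v \<in> set (src G l2) \<Longrightarrow> l1 = l2"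
  unfolding hg_ok_def by blast

lemma hg_tgt_uniq: "hg_ok G S \<Longrightarrow> ntyp G v = Mty \<Longrightarrow> l1 \<in> S \<Longrightarrow> l2 \<in> S \<Longrightarrow> v \<in> set (tgt G l1) \<Longrightarrow> v \<in> set (tgt G l2) \<Longrightarrow> l1 = l2"
  unfolding hg_ok_def by blast

lemma hg_tgt_ex: "hg_ok G S \<Longrightarrow> v \<in> nodes G S \<Longrightarrow> \<exists>l\<in>S. v \<in> set (tgt G l)"
  unfolding hg_ok_def by blast

lemma bang_shape: "link_ok G l \<Longrightarrow> lab G l = Bang \<Longrightarrow>
   src G l = [bang_root G l, bang_enode G l] \<and> tgt G l = [] \<and> ntyp G (bang_root G l) = Mty \<and> ntyp G (bang_enode G l) = Ety"
  unfolding link_ok_def bang_root_def bang_enode_def by auto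

lemma weak_shape: "link_ok G l \<Longrightarrow> lab G l = Weak \<Longrightarrow>
   src G l = [] \<and> tgt G l = [weak_enode G l] \<and> ntyp G (weak_enode G l) = Ety"
  unfolding link_ok_def weak_enode_def by auto

lemma par_shape: "link_ok G l \<Longrightarrow> lab G l = Par \<Longrightarrow>
   \<exists>x b r. src G l = [x, b] \<and> tgt G l = [r] \<and> ntyp G x = Ety \<and> ntyp G b = Mty \<and> ntyp G r = Mty \<and> distinct [x,b,r]"
  unfolding link_ok_def by auto

lemma tens_shape: "link_ok G l \<Longrightarrow> lab G l = Tens \<Longrightarrow>
   \<exists>f r. src G l = [f] \<and> tgt G l = [r, tens_enode G l] \<and> ntyp G f = Mty \<and> ntyp G r = Mty \<and> ntyp G (tens_enode G l) = Ety \<and> distinct [f,r,tens_enode G l]"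
  unfolding link_ok_def tens_enode_def by auto

lemma nodes_mono: "A \<subseteq> B \<Longrightarrow> nodes G A \<subseteq> nodes G B"
  unfolding nodes_def by blast
lemma sources_mono: "A \<subseteq> B \<Longrightarrow> sources G A \<subseteq> sources G B"
  unfolding sources_def by blast

lemma in_sources: "l \<in> S \<Longrightarrow> v \<in> set (src G l) \<Longrightarrow> v \<in> sources G S"
  unfolding sources_def by blast
lemma in_nodes_src: "l \<in> S \<Longrightarrow> v \<in> set (src G l) \<Longrightarrow> v \<in> nodes G S"
  unfolding nodes_def by blast
lemma in_nodes_tgt: "l \<in> S \<Longrightarrow> v \<in> set (tgt G l) \<Longrightarrow> v \<in> nodes G S"
  unfolding nodes_def by blast

lemma box_node_M:
  assumes "prenet G P" "h \<in> P" "lab G h = Bang" "v \<in> nodes G (ibox G h)" "ntyp G v = Mty"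
    "\<forall>k\<in>P. v \<in> set (src G k) \<longrightarrow> k \<notin> ibox G h \<and> k \<noteq> h"
  shows False
proof -
  have B: "ibox G h \<subseteq> P" "h \<notin> ibox G h" "prenet G (ibox G h)" "root G (ibox G h) = bang_root G h"
    using prenet_box[OF assms(1-3)] by auto
  have "v \<notin> sources G (ibox G h)"
    using assms(6) B(1) unfolding sources_def by blast
  hence "v \<in> term_m G (ibox G h)" using assms(4,5) unfolding term_m_def terminal_def by blast
  hence "v = bang_root G h" using hg_term_m[OF prenet_hg[OF B(3)]] B(4) by auto
  moreover have "link_ok G h" using hg_link_ok[OF prenet_hg[OF assms(1)] assms(2)] .
  ultimately have "v \<in> set (src G h)" using bang_shape assms(3) by (metis list.set_intros(1))
  thus False using assms(6) assms(2) by blast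
qed

lemma box_node_E:
  assumes "prenet G P" "h \<in> P" "lab G h = Bang" "fv G (ibox G h) \<subseteq> fv G P"
    "v \<in> nodes G (ibox G h)" "ntyp G v = Ety" "v \<in> set (src G k)" "k \<in> P" "k \<notin> ibox G h"
  shows False
proof -
  have B: "ibox G h \<subseteq> P"
    using prenet_box[OF assms(1-3)] by auto
  have hg: "hg_ok G P" using prenet_hg[OF assms(1)] .
  have "v \<notin> sources G (ibox G h)"
  proof
    assume "v \<in> sources G (ibox G h)"
    then obtain k' where "k' \<in> ibox G h" "v \<in> set (src G k')" unfolding sources_def by blast
    with hg_src_uniq[OF hg, of k' k v] assms(7,8,9) B show False by blast
  qed
  hence "v \<in> fv G (ibox G h)" using assms(5,6) unfolding fv_def terminal_def by blast
  hence "v \<in> terminal G P" using assms(4) unfolding fv_def by blast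
  moreover have "v \<in> sources G P" using in_sources[OF assms(8,7)] .
  ultimately show False unfolding terminal_def by blast
qed

lemma level0_by_tgt:
  assumes "prenet G P" "t \<in> P" "v \<in> set (tgt G t)" "ntyp G v = Mty"
    "\<forall>k\<in>P. v \<in> set (src G k) \<longrightarrow> level0 G P k \<and> lab G k \<noteq> Bang"
  shows "level0 G P t"
  unfolding level0_def
proof (intro conjI ballI impI notI)
  show "t \<in> P" by fact
  fix h assume h: "h \<in> P" "lab G h = Bang" "t \<in> ibox G h"
  show False
  proof (rule box_node_M[OF assms(1) h(1,2) _ assms(4)])
    show "v \<in> nodes G (ibox G h)" using in_nodes_tgt[OF h(3) assms(3)] .
    show "\<forall>k\<in>P. v \<in> set (src G k) \<longrightarrow> k \<notin> ibox G h \<and> k \<noteq> h"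
      using assms(5) h unfolding level0_def by metis
  qed
qed

lemma level0_Q:
  assumes "Q \<subseteq> P" "\<forall>h\<in>P-Q. lab G h = Bang \<longrightarrow> ibox G h \<subseteq> P-Q"
  shows "level0 G Q k = (k \<in> Q \<and> level0 G P k)"
  using assms unfolding level0_def by blast

lemma corr_edges_sub:
  assumes "Q \<subseteq> P" "\<forall>h\<in>P-Q. lab G h = Bang \<longrightarrow> ibox G h \<subseteq> P-Q"
  shows "corr_edges G Q \<subseteq> corr_edges G P"
  using level0_Q[OF assms] unfolding corr_edges_def by blast

lemma corr_term_char:
  assumes "correct G P" "Q \<subseteq> P" "\<forall>h\<in>P-Q. lab G h = Bang \<longrightarrow> ibox G h \<subseteq> P-Q"
    "v \<in> corr_term_m G Q"
  shows "v = root G P \<or> (\<exists>k\<in>P-Q. level0 G P k \<and> lab G k \<noteq> Bang \<and> v \<in> set (src G k))"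
proof -
  note L = level0_Q[OF assms(2,3)]
  have hg: "hg_ok G P" using prenet_hg[OF correct_prenet[OF assms(1)]] .
  have M: "ntyp G v = Mty" and vn: "v \<in> corr_nodes G Q" and vs: "v \<notin> corr_sources G Q"
    using assms(4) unfolding corr_term_m_def by auto
  have vnP: "v \<in> corr_nodes G P" using vn L unfolding corr_nodes_def by blast
  show ?thesis
  proof (cases "v \<in> corr_sources G P")
    case False
    hence "v \<in> corr_term_m G P" using vnP M unfolding corr_term_m_def by blast
    thus ?thesis using correct_D[OF assms(1)] by blast
  next
    case True
    then consider (a) k where "level0 G P k" "lab G k \<noteq> Bang" "v \<in> set (src G k)"
      | (b) l where "level0 G P l" "lab G l = Bang" "v = bang_enode G l"
      unfolding corr_sources_def by blast
    thus ?thesis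
    proof cases
      case a
      show ?thesis
      proof (cases "k \<in> Q")
        case True
        hence "v \<in> corr_sources G Q" using a L unfolding corr_sources_def by blast
        thus ?thesis using vs by blast
      next
        case False thus ?thesis using a unfolding level0_def by blast
      qed
    next
      case b
      have lk: "link_ok G l" using hg_link_ok[OF hg] b(1) unfolding level0_def by blast
      have "ntyp G v = Ety" using bang_shape[OF lk b(2)] b(3) by simp
      thus ?thesis using M by simp
    qed
  qed
qed

lemma corr_term_in:
  assumes "correct G P" "Q \<subseteq> P" "\<forall>h\<in>P-Q. lab G h = Bang \<longrightarrow> ibox G h \<subseteq> P-Q"
    "ntyp G r = Mty" "r \<notin> sources G Q" "t \<in> Q" "level0 G P t" "lab G t \<noteq> Bang" "r \<in> set (tgt G t)"
  shows "r \<in> corr_term_m G Q"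
proof -
  note L = level0_Q[OF assms(2,3)]
  have hg: "hg_ok G P" using prenet_hg[OF correct_prenet[OF assms(1)]] .
  have "r \<in> corr_nodes G Q" using assms(6-9) L unfolding corr_nodes_def by blast
  moreover have "r \<notin> corr_sources G Q"
  proof
    assume "r \<in> corr_sources G Q"
    then consider (a) k where "level0 G Q k" "r \<in> set (src G k)"
      | (b) l where "level0 G Q l" "lab G l = Bang" "r = bang_enode G l"
      unfolding corr_sources_def by blast
    thus False
    proof cases
      case a thus False using assms(5) in_sources[of k Q r G] unfolding level0_def by blast
    next
      case b
      have lk: "link_ok G l" using hg_link_ok[OF hg] b(1) assms(2) unfolding level0_def by blast
      have "ntyp G r = Ety" using bang_shape[OF lk b(2)] b(3) by simp
      thus False using assms(4) by simp
    qed
  qed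
  ultimately show ?thesis using assms(4) unfolding corr_term_m_def by blast
qed

lemma removal:
  assumes P: "correct G P" and QP: "Q \<subseteq> P"
    and H1: "\<forall>k\<in>Q. \<forall>v\<in>set (src G k). \<exists>t\<in>Q. v \<in> set (tgt G t)"
    and H2: "term_m G Q = {\<rho>}"
    and H3: "\<forall>h\<in>Q. lab G h = Bang \<longrightarrow> ibox G h \<subseteq> Q"
    and H5: "\<forall>h\<in>P-Q. lab G h = Bang \<longrightarrow> ibox G h \<subseteq> P-Q"
    and H4: "corr_term_m G Q = {\<rho>}"
    and H6: "\<forall>l\<in>P. \<forall>v\<in>set (tgt G l). v \<in> internal G Q \<and> ntyp G v = Ety \<longrightarrow> l \<in> Q"
    and H7: "\<forall>l\<in>P. lab G l = Bang \<and> fv G (ibox G l) \<inter> internal G Q \<noteq> {} \<longrightarrow> ibox G l \<subseteq> Q"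
  shows "subnet G Q P"
proof -
  have pP: "prenet G P" using correct_prenet[OF P] .
  have hg: "hg_ok G P" using prenet_hg[OF pP] .
  have hgQ: "hg_ok G Q"
    unfolding hg_ok_def
  proof (intro conjI)
    show "finite Q" using hg QP unfolding hg_ok_def by (meson finite_subset)
    show "\<forall>l\<in>Q. link_ok G l" using hg QP unfolding hg_ok_def by blast
    show "\<forall>v\<in>nodes G Q. \<exists>l\<in>Q. v \<in> set (tgt G l)"
      using H1 unfolding nodes_def by blast
    show "\<forall>v l1 l2. l1 \<in> Q \<longrightarrow> l2 \<in> Q \<longrightarrow> v \<in> set (src G l1) \<longrightarrow> v \<in> set (src G l2) \<longrightarrow> l1 = l2"
      using hg QP unfolding hg_ok_def by blast
    show "\<forall>v l1 l2. ntyp G v = Mty \<longrightarrow> l1 \<in> Q \<longrightarrow> l2 \<in> Q \<longrightarrow> v \<in> set (tgt G l1) \<longrightarrow> v \<in> set (tgt G l2) \<longrightarrow> l1 = l2"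
      using hg QP unfolding hg_ok_def by blast
    show "\<exists>!v. v \<in> term_m G Q" using H2 by auto
  qed
  have rootQ: "root G Q = \<rho>" using hg_term_m[OF hgQ] H2 by auto
  have pQ: "prenet G Q"
  proof (rule prenet.intros[OF hgQ])
    show "boxes_nested G Q" using prenet_nested[OF pP] QP unfolding boxes_nested_def by blast
    show "\<forall>l\<in>Q. lab G l = Bang \<longrightarrow>
      ibox G l \<subseteq> Q \<and> l \<notin> ibox G l \<and> prenet G (ibox G l) \<and>
      root G (ibox G l) = bang_root G l \<and>
      (\<forall>w\<in>ibox G l. lab G w = Weak \<longrightarrow> set (tgt G w) \<inter> fv G (ibox G l) = {})"
      using prenet_box[OF pP] H3 QP by blast
  qed
  note L = level0_Q[OF QP H5]
  have cQ: "correct G Q"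
  proof (rule correct.intros[OF pQ])
    show "corr_term_m G Q = {root G Q}" using H4 rootQ by simp
    show "acyclic (corr_edges G Q)"
      using acyclic_subset[OF _ corr_edges_sub[OF QP H5]] correct_D[OF P] by blast
    show "\<forall>l. level0 G Q l \<and> lab G l = Bang \<longrightarrow> correct G (ibox G l)"
      using L correct_D[OF P] by blast
  qed
  show ?thesis unfolding subnet_def using QP cQ H6 H3 H7 by blast
qed

lemma internal_sub: "internal G Q \<subseteq> sources G Q"
  unfolding internal_def terminal_def by blast

lemma root_facts:
  assumes "correct G P"
  shows "ntyp G (root G P) = Mty" "root G P \<notin> sources G P" "\<exists>t\<in>P. root G P \<in> set (tgt G t)"
proof -
  have hg: "hg_ok G P" using prenet_hg[OF correct_prenet[OF assms]] .
  have "root G P \<in> term_m G P" using hg_term_m[OF hg] by simp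
  thus "ntyp G (root G P) = Mty" "root G P \<notin> sources G P"
    unfolding term_m_def terminal_def by auto
  show "\<exists>t\<in>P. root G P \<in> set (tgt G t)"
    using hg_tgt_ex[OF hg] \<open>root G P \<in> term_m G P\<close> unfolding term_m_def terminal_def by blast
qed

lemma root_link_level0:
  assumes "correct G P" "t \<in> P" "root G P \<in> set (tgt G t)"
  shows "level0 G P t" "lab G t \<noteq> Bang"
proof -
  have pP: "prenet G P" using correct_prenet[OF assms(1)] .
  have "\<forall>k\<in>P. root G P \<in> set (src G k) \<longrightarrow> level0 G P k \<and> lab G k \<noteq> Bang"
  proof (intro ballI impI)
    fix k assume "k \<in> P" "root G P \<in> set (src G k)"
    hence "root G P \<in> sources G P" by (rule in_sources)
    thus "level0 G P k \<and> lab G k \<noteq> Bang" using root_facts(2)[OF assms(1)] by blast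
  qed
  thus "level0 G P t"
    using level0_by_tgt[OF pP assms(2,3) root_facts(1)[OF assms(1)]] by blast
  have lk: "link_ok G t" using hg_link_ok[OF prenet_hg[OF pP] assms(2)] .
  show "lab G t \<noteq> Bang"
  proof
    assume "lab G t = Bang"
    hence "tgt G t = []" using bang_shape[OF lk] by blast
    thus False using assms(3) by simp
  qed
qed

lemma box_sub: "prenet G P \<Longrightarrow> h \<in> P \<Longrightarrow> lab G h = Bang \<Longrightarrow> ibox G h \<subseteq> P"
  using prenet_box[of G P h] by simp

lemma part1:
  assumes P: "correct G P" and fw: "free_weakening G P l"
  shows "subnet G (P - {l}) P"
proof -
  define Q where "Q = P - {l}"
  have pP: "prenet G P" using correct_prenet[OF P] .
  have hg: "hg_ok G P" using prenet_hg[OF pP] .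
  have lP: "l \<in> P" and lw: "lab G l = Weak" and xfv: "weak_enode G l \<in> fv G P"
    using fw unfolding free_weakening_def by auto
  define x where "x = weak_enode G l"
  have sh: "src G l = []" "tgt G l = [x]" "ntyp G x = Ety"
    using weak_shape[OF hg_link_ok[OF hg lP] lw] x_def by auto
  have xns: "x \<notin> sources G P" using xfv x_def unfolding fv_def terminal_def by blast
  have QP: "Q \<subseteq> P" "P - Q = {l}" using lP Q_def by auto
  have lev: "level0 G P l"
    unfolding level0_def
  proof (intro conjI ballI impI notI)
    show "l \<in> P" by fact
    fix h assume h: "h \<in> P" "lab G h = Bang" "l \<in> ibox G h"
    have "\<forall>w\<in>ibox G h. lab G w = Weak \<longrightarrow> set (tgt G w) \<inter> fv G (ibox G h) = {}"
      "ibox G h \<subseteq> P"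
      using prenet_box[OF pP h(1,2)] by auto
    hence A: "x \<notin> fv G (ibox G h)" using h(3) lw sh by auto
    have "x \<in> nodes G (ibox G h)" using in_nodes_tgt[OF h(3), of x G] sh by simp
    moreover have "x \<notin> sources G (ibox G h)"
      using xns sources_mono[OF \<open>ibox G h \<subseteq> P\<close>, of G] by blast
    ultimately have "x \<in> fv G (ibox G h)" using sh unfolding fv_def terminal_def by blast
    thus False using A by blast
  qed
  have PQ: "P = insert l Q" using QP lP by blast
  have srcQ: "sources G Q = sources G P" using sh unfolding PQ sources_def by simp
  obtain t where t: "t \<in> P" "root G P \<in> set (tgt G t)" using root_facts(3)[OF P] by blast
  have tl: "t \<noteq> l" using t sh root_facts(1)[OF P] by auto
  have tQ: "t \<in> Q" using t tl Q_def by simp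
  have H5: "\<forall>h\<in>P-Q. lab G h = Bang \<longrightarrow> ibox G h \<subseteq> P-Q" using QP lw by auto
  have "subnet G Q P"
  proof (rule removal[OF P QP(1), of "root G P"])
    show "\<forall>k\<in>Q. \<forall>v\<in>set (src G k). \<exists>t\<in>Q. v \<in> set (tgt G t)"
    proof (intro ballI)
      fix k v assume k: "k \<in> Q" "v \<in> set (src G k)"
      obtain t' where t': "t' \<in> P" "v \<in> set (tgt G t')"
        using hg_tgt_ex[OF hg in_nodes_src[of k P v G]] k QP by blast
      have "v \<in> sources G P" using in_sources[of k P v G] k QP by blast
      hence "t' \<noteq> l" using t' sh xns by auto
      thus "\<exists>t\<in>Q. v \<in> set (tgt G t)" using t' Q_def by blast
    qed
    show "term_m G Q = {root G P}"
    proof -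
      have rn: "root G P \<in> nodes G Q" using in_nodes_tgt[OF tQ t(2)] .
      have "root G P \<notin> sources G Q" using root_facts(2)[OF P] srcQ by simp
      hence "root G P \<in> term_m G Q"
        unfolding term_m_def terminal_def using rn root_facts(1)[OF P] by simp
      moreover have "v = root G P" if "v \<in> term_m G Q" for v
      proof -
        have "v \<in> nodes G Q" "v \<notin> sources G Q" "ntyp G v = Mty"
          using that unfolding term_m_def terminal_def by auto
        hence "v \<in> term_m G P" using nodes_mono[OF QP(1), of G] srcQ
          unfolding term_m_def terminal_def by auto
        thus ?thesis using hg_term_m[OF hg] by blast
      qed
      ultimately show ?thesis by blast
    qed
    show "\<forall>h\<in>Q. lab G h = Bang \<longrightarrow> ibox G h \<subseteq> Q"
    proof (intro ballI impI)
      fix h assume hQ: "h \<in> Q" "lab G h = Bang"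
      have hP: "h \<in> P" using hQ QP by blast
      have "ibox G h \<subseteq> P" using box_sub[OF pP hP hQ(2)] .
      moreover have "l \<notin> ibox G h" using lev hP hQ(2) unfolding level0_def by blast
      ultimately show "ibox G h \<subseteq> Q" using Q_def by blast
    qed
    show "\<forall>h\<in>P-Q. lab G h = Bang \<longrightarrow> ibox G h \<subseteq> P-Q" by fact
    show "corr_term_m G Q = {root G P}"
    proof -
      have "root G P \<in> corr_term_m G Q"
        using corr_term_in[OF P QP(1) H5 root_facts(1)[OF P] _ tQ root_link_level0[OF P t]  t(2)]
          root_facts(2)[OF P] srcQ by blast
      moreover have "v = root G P" if "v \<in> corr_term_m G Q" for v
        using corr_term_char[OF P QP(1) H5 that] QP sh by auto
      ultimately show ?thesis by blast
    qed
    show "\<forall>k\<in>P. \<forall>v\<in>set (tgt G k). v \<in> internal G Q \<and> ntyp G v = Ety \<longrightarrow> k \<in> Q"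
    proof (intro ballI impI)
      fix k v assume k: "k \<in> P" "v \<in> set (tgt G k)" "v \<in> internal G Q \<and> ntyp G v = Ety"
      hence "v \<in> sources G P" using internal_sub[of G Q] srcQ by blast
      hence "k \<noteq> l" using xns sh k(2) by auto
      thus "k \<in> Q" using k Q_def by blast
    qed
    show "\<forall>h\<in>P. lab G h = Bang \<and> fv G (ibox G h) \<inter> internal G Q \<noteq> {} \<longrightarrow> ibox G h \<subseteq> Q"
    proof (intro ballI impI)
      fix h assume "h \<in> P" "lab G h = Bang \<and> fv G (ibox G h) \<inter> internal G Q \<noteq> {}"
      hence "ibox G h \<subseteq> P" "l \<notin> ibox G h" using box_sub[OF pP] lev unfolding level0_def by auto
      thus "ibox G h \<subseteq> Q" using Q_def by blast
    qed
  qed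
  thus ?thesis using Q_def by simp
qed

lemma box_avoid_level0:
  assumes "prenet G P" "level0 G P l" "h \<in> P" "lab G h = Bang"
  shows "ibox G h \<subseteq> P - {l}"
proof -
  have "ibox G h \<subseteq> P" using box_sub[OF assms(1,3,4)] .
  moreover have "l \<notin> ibox G h" using assms(2,3,4) unfolding level0_def by blast
  ultimately show ?thesis by blast
qed

lemma corr_nodes_M:
  assumes "hg_ok G P" "Q \<subseteq> P" "v \<in> corr_nodes G Q" "ntyp G v = Mty"
  shows "v \<in> nodes G Q"
proof -
  consider (a) k where "level0 G Q k" "v \<in> set (src G k) \<union> set (tgt G k)"
    | (b) l where "level0 G Q l" "lab G l = Bang" "v = bang_enode G l \<or> v \<in> fv G (ibox G l)"
    using assms(3) unfolding corr_nodes_def by blast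
  thus ?thesis
  proof cases
    case a
    hence "k \<in> Q" unfolding level0_def by blast
    thus ?thesis using a(2) unfolding nodes_def by blast
  next
    case b
    have "l \<in> P" using b(1) assms(2) unfolding level0_def by blast
    hence lk: "link_ok G l" using hg_link_ok[OF assms(1)] by blast
    have "ntyp G (bang_enode G l) = Ety" using bang_shape[OF lk b(2)] by simp
    hence "ntyp G v = Ety" using b(3) unfolding fv_def by auto
    thus ?thesis using assms(4) by simp
  qed
qed

lemma part2:
  assumes P: "correct G P" and rl: "root_link G P l" and lp: "lab G l = Par"
  shows "subnet G (P - {l}) P"
proof -
  define Q where "Q = P - {l}"
  have pP: "prenet G P" using correct_prenet[OF P] .
  have hg: "hg_ok G P" using prenet_hg[OF pP] .
  have lP: "l \<in> P" and rt: "root G P \<in> set (tgt G l)" using rl unfolding root_link_def by auto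
  obtain x b r where sh: "src G l = [x, b]" "tgt G l = [r]" "ntyp G x = Ety" "ntyp G b = Mty"
     "ntyp G r = Mty" "distinct [x,b,r]"
    using par_shape[OF hg_link_ok[OF hg lP] lp] by blast
  have rr: "r = root G P" using rt sh by simp
  have lev: "level0 G P l" using root_link_level0[OF P lP rt] by blast
  have QP: "Q \<subseteq> P" "P - Q = {l}" "l \<notin> Q" using lP Q_def by auto
  have PQ: "P = insert l Q" using QP lP by blast
  have srcP: "sources G P = sources G Q \<union> {x, b}" using sh unfolding PQ sources_def by auto
  have xbQ: "x \<notin> sources G Q" "b \<notin> sources G Q"
  proof -
    have "v \<notin> sources G Q" if "v \<in> set (src G l)" for v
    proof
      assume "v \<in> sources G Q"
      then obtain k where "k \<in> Q" "v \<in> set (src G k)" unfolding sources_def by blast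
      hence "k = l" using hg_src_uniq[OF hg, of k l v] that QP by blast
      thus False using \<open>k \<in> Q\<close> QP by blast
    qed
    thus "x \<notin> sources G Q" "b \<notin> sources G Q" using sh by auto
  qed
  have rns: "r \<notin> sources G P" using root_facts(2)[OF P] rr by simp
  have rnQ: "r \<notin> nodes G Q"
  proof
    assume "r \<in> nodes G Q"
    then obtain k where k: "k \<in> Q" "r \<in> set (src G k) \<or> r \<in> set (tgt G k)" unfolding nodes_def by blast
    show False
    proof (cases "r \<in> set (src G k)")
      case True thus False using in_sources[of k P r G] k QP rns by blast
    next
      case False
      hence "r \<in> set (tgt G k)" using k by blast
      moreover have "k \<in> P" using k QP by blast
      moreover have "r \<in> set (tgt G l)" using sh by simp
      ultimately have "k = l" using hg_tgt_uniq[OF hg sh(5) _ lP] by blast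
      thus False using k QP by blast
    qed
  qed
  have "b \<in> nodes G P" using in_nodes_src[OF lP, of b G] sh by simp
  then obtain t where t: "t \<in> P" "b \<in> set (tgt G t)" using hg_tgt_ex[OF hg] by blast
  have tl: "t \<noteq> l" using t sh by auto
  have tQ: "t \<in> Q" using t tl Q_def by simp
  have tlev: "level0 G P t"
  proof (rule level0_by_tgt[OF pP t sh(4)])
    show "\<forall>k\<in>P. b \<in> set (src G k) \<longrightarrow> level0 G P k \<and> lab G k \<noteq> Bang"
    proof (intro ballI impI)
      fix k assume "k \<in> P" "b \<in> set (src G k)"
      hence "k = l" using hg_src_uniq[OF hg, of k l b] lP sh by simp
      thus "level0 G P k \<and> lab G k \<noteq> Bang" using lev lp by simp
    qed
  qed
  have tnb: "lab G t \<noteq> Bang"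
  proof
    assume "lab G t = Bang"
    hence "tgt G t = []" using bang_shape[OF hg_link_ok[OF hg t(1)]] by blast
    thus False using t(2) by simp
  qed
  have H5: "\<forall>h\<in>P-Q. lab G h = Bang \<longrightarrow> ibox G h \<subseteq> P-Q" using QP lp by auto
  have "subnet G Q P"
  proof (rule removal[OF P QP(1), of b])
    show "\<forall>k\<in>Q. \<forall>v\<in>set (src G k). \<exists>t\<in>Q. v \<in> set (tgt G t)"
    proof (intro ballI)
      fix k v assume k: "k \<in> Q" "v \<in> set (src G k)"
      have kP: "k \<in> P" using k QP by blast
      obtain t' where t': "t' \<in> P" "v \<in> set (tgt G t')"
        using hg_tgt_ex[OF hg in_nodes_src[OF kP k(2)]] by blast
      have "v \<in> sources G P" using in_sources[OF kP k(2)] .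
      hence "t' \<noteq> l" using t' sh rns by auto
      thus "\<exists>t\<in>Q. v \<in> set (tgt G t)" using t' Q_def by blast
    qed
    show "term_m G Q = {b}"
    proof -
      have bn: "b \<in> nodes G Q" using in_nodes_tgt[OF tQ t(2)] .
      hence "b \<in> term_m G Q"
        unfolding term_m_def terminal_def using xbQ sh by simp
      moreover have "v = b" if "v \<in> term_m G Q" for v
      proof -
        have v: "v \<in> nodes G Q" "v \<notin> sources G Q" "ntyp G v = Mty"
          using that unfolding term_m_def terminal_def by auto
        have vP: "v \<in> nodes G P" using nodes_mono[OF QP(1), of G] v(1) by blast
        show ?thesis
        proof (cases "v \<in> sources G P")
          case True
          thus ?thesis using srcP v sh by auto
        next
          case False
          hence "v \<in> term_m G P" using vP v(3) unfolding term_m_def terminal_def by simp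
          hence "v = r" using hg_term_m[OF hg] rr by simp
          thus ?thesis using v(1) rnQ by simp
        qed
      qed
      ultimately show ?thesis by blast
    qed
    show "\<forall>h\<in>Q. lab G h = Bang \<longrightarrow> ibox G h \<subseteq> Q"
      using box_avoid_level0[OF pP lev] QP unfolding Q_def by blast
    show "\<forall>h\<in>P-Q. lab G h = Bang \<longrightarrow> ibox G h \<subseteq> P-Q" by fact
    show "corr_term_m G Q = {b}"
    proof -
      have "b \<in> corr_term_m G Q"
        using corr_term_in[OF P QP(1) H5 sh(4) xbQ(2) tQ tlev tnb t(2)] .
      moreover have "v = b" if "v \<in> corr_term_m G Q" for v
      proof -
        have vM: "ntyp G v = Mty" and vc: "v \<in> corr_nodes G Q"
          using that unfolding corr_term_m_def by auto
        have "v \<in> nodes G Q" using corr_nodes_M[OF hg QP(1) vc vM] .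
        hence "v \<noteq> root G P" using rnQ rr by auto
        hence "\<exists>k\<in>P-Q. level0 G P k \<and> lab G k \<noteq> Bang \<and> v \<in> set (src G k)"
          using corr_term_char[OF P QP(1) H5 that] by blast
        hence "v \<in> set (src G l)" using QP(2) by simp
        thus ?thesis using sh vM by auto
      qed
      ultimately show ?thesis by blast
    qed
    show "\<forall>k\<in>P. \<forall>v\<in>set (tgt G k). v \<in> internal G Q \<and> ntyp G v = Ety \<longrightarrow> k \<in> Q"
    proof (intro ballI impI)
      fix k v assume k: "k \<in> P" "v \<in> set (tgt G k)" "v \<in> internal G Q \<and> ntyp G v = Ety"
      have "k \<noteq> l"
      proof
        assume "k = l" thus False using k sh by simp
      qed
      thus "k \<in> Q" using k Q_def by blast
    qed
    show "\<forall>h\<in>P. lab G h = Bang \<and> fv G (ibox G h) \<inter> internal G Q \<noteq> {} \<longrightarrow> ibox G h \<subseteq> Q"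
      using box_avoid_level0[OF pP lev] unfolding Q_def by blast
  qed
  thus ?thesis using Q_def by simp
qed

lemma ntype_cases: "t = Mty \<or> t = Ety" by (cases t) auto

lemma fb_basic:
  assumes "prenet G P" "free_bang G P h"
  shows "h \<in> P" "lab G h = Bang" "level0 G P h" "fv G (ibox G h) \<subseteq> fv G P" "ibox G h \<subseteq> P" "h \<notin> ibox G h"
proof -
  show "h \<in> P" "lab G h = Bang" "level0 G P h" "fv G (ibox G h) \<subseteq> fv G P"
    using assms(2) unfolding free_bang_def level0_def by auto
  thus "ibox G h \<subseteq> P" "h \<notin> ibox G h" using prenet_box[OF assms(1), of h] by auto
qed

lemma fb_closed:
  assumes "prenet G P" "free_bang G P h" "h' \<in> insert h (ibox G h)" "lab G h' = Bang"
  shows "ibox G h' \<subseteq> insert h (ibox G h)"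
proof (cases "h' = h")
  case True thus ?thesis by blast
next
  case False
  hence h': "h' \<in> ibox G h" using assms(3) by blast
  note F = fb_basic[OF assms(1,2)]
  have "boxes_nested G P" using prenet_nested[OF assms(1)] .
  hence "ibox G h' \<subseteq> ibox G h"
    unfolding boxes_nested_def using F(1,2,5) h' assms(4) by blast
  thus ?thesis by blast
qed

lemma fb_avoid:
  assumes "prenet G P" "free_bang G P h" "h' \<in> P" "h' \<notin> insert h (ibox G h)" "lab G h' = Bang"
  shows "ibox G h' \<inter> insert h (ibox G h) = {}"
proof -
  note F = fb_basic[OF assms(1,2)]
  have "h \<notin> ibox G h'" using F(3) assms(3,5) unfolding level0_def by blast
  moreover have "ibox G h \<inter> ibox G h' = {}"
  proof (rule ccontr)
    assume "ibox G h \<inter> ibox G h' \<noteq> {}"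
    moreover have "boxes_nested G P" using prenet_nested[OF assms(1)] .
    ultimately have "h = h' \<or> h \<in> ibox G h' \<or> h' \<in> ibox G h"
      unfolding boxes_nested_def using F(1,2) assms(3,5) by blast
    thus False using assms(4) \<open>h \<notin> ibox G h'\<close> by blast
  qed
  ultimately show ?thesis by blast
qed

lemma fb_node:
  assumes "prenet G P" "free_bang G P h" "k \<in> P" "k \<notin> ibox G h" "k \<noteq> h"
    "v \<in> set (src G k)" "v \<in> nodes G (ibox G h)"
  shows False
proof -
  note F = fb_basic[OF assms(1,2)]
  have hg: "hg_ok G P" using prenet_hg[OF assms(1)] .
  consider "ntyp G v = Mty" | "ntyp G v = Ety" using ntype_cases by blast
  thus False
  proof cases
    case 1
    show False
    proof (rule box_node_M[OF assms(1) F(1,2) assms(7) 1])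
      show "\<forall>k'\<in>P. v \<in> set (src G k') \<longrightarrow> k' \<notin> ibox G h \<and> k' \<noteq> h"
      proof (intro ballI impI)
        fix k' assume "k' \<in> P" "v \<in> set (src G k')"
        hence "k' = k" using hg_src_uniq[OF hg _ assms(3) _ assms(6)] by blast
        thus "k' \<notin> ibox G h \<and> k' \<noteq> h" using assms(4,5) by simp
      qed
    qed
  next
    case 2
    show False using box_node_E[OF assms(1) F(1,2,4) assms(7) 2 assms(6,3,4)] .
  qed
qed

lemma fb_src_targeted:
  assumes "prenet G P" "free_bang G P h" "k \<in> insert h (ibox G h)" "v \<in> set (src G k)" "ntyp G v = Mty"
  shows "\<exists>t\<in>ibox G h. v \<in> set (tgt G t)"
proof -
  note F = fb_basic[OF assms(1,2)]
  have hg: "hg_ok G P" using prenet_hg[OF assms(1)] .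
  have pb: "prenet G (ibox G h)" "root G (ibox G h) = bang_root G h"
    using prenet_box[OF assms(1) F(1,2)] by auto
  have hgb: "hg_ok G (ibox G h)" using prenet_hg[OF pb(1)] .
  have "v \<in> nodes G (ibox G h)"
  proof (cases "k = h")
    case True
    have lk: "link_ok G h" using hg_link_ok[OF hg F(1)] .
    have "v = bang_root G h \<or> v = bang_enode G h" using bang_shape[OF lk F(2)] assms(4) True by auto
    moreover have "ntyp G (bang_enode G h) = Ety" using bang_shape[OF lk F(2)] by simp
    ultimately have "v = root G (ibox G h)" using assms(5) pb(2) by auto
    hence "v \<in> term_m G (ibox G h)" using hg_term_m[OF hgb] by simp
    thus ?thesis unfolding term_m_def terminal_def by blast
  next
    case False
    hence "k \<in> ibox G h" using assms(3) by blast
    thus ?thesis using in_nodes_src[OF _ assms(4)] by blast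
  qed
  thus ?thesis using hg_tgt_ex[OF hgb] by blast
qed

lemma removed_M:
  assumes "hg_ok G P" "Q \<subseteq> P" "v \<in> nodes G Q" "ntyp G v = Mty" "k \<in> P - Q" "v \<in> set (src G k)"
    "t \<in> P - Q" "v \<in> set (tgt G t)"
  shows False
proof -
  obtain k' where k': "k' \<in> Q" "v \<in> set (src G k') \<or> v \<in> set (tgt G k')"
    using assms(3) unfolding nodes_def by blast
  have "k' \<in> P" using k' assms(2) by blast
  show False
  proof (cases "v \<in> set (src G k')")
    case True
    hence "k' = k" using hg_src_uniq[OF assms(1) \<open>k' \<in> P\<close> _ True assms(6)] assms(5) by blast
    thus False using k' assms(5) by blast
  next
    case False
    hence "v \<in> set (tgt G k')" using k' by blast
    hence "k' = t" using hg_tgt_uniq[OF assms(1) assms(4) \<open>k' \<in> P\<close> _ _ assms(8)] assms(7) by blast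
    thus False using k' assms(7) by blast
  qed
qed

lemma part3:
  assumes P: "correct G P" and fb: "free_bang G P l"
  shows "subnet G (P - ({l} \<union> ibox G l)) P"
proof -
  define B where "B = insert l (ibox G l)"
  define Q where "Q = P - B"
  have pP: "prenet G P" using correct_prenet[OF P] .
  have hg: "hg_ok G P" using prenet_hg[OF pP] .
  note F = fb_basic[OF pP fb]
  have BP: "B \<subseteq> P" unfolding B_def using F(1,5) by simp
  have QP: "Q \<subseteq> P" "P - Q = B" unfolding Q_def using BP by auto
  have memQ: "\<And>x. x \<in> Q \<longleftrightarrow> x \<in> P \<and> x \<noteq> l \<and> x \<notin> ibox G l"
    by (auto simp: Q_def B_def)
  have memB: "\<And>x. x \<in> B \<longleftrightarrow> x = l \<or> x \<in> ibox G l" by (simp add: B_def)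
  obtain t0 where t0: "t0 \<in> P" "root G P \<in> set (tgt G t0)" using root_facts(3)[OF P] by blast
  have t0l: "level0 G P t0" "lab G t0 \<noteq> Bang" using root_link_level0[OF P t0] by auto
  have t0Q: "t0 \<in> Q"
  proof -
    have "t0 \<noteq> l" using t0l F(2) by auto
    moreover have "t0 \<notin> ibox G l" using t0l(1) F(1,2) unfolding level0_def by blast
    ultimately show ?thesis using t0 memQ by simp
  qed
  have sQ: "sources G Q \<subseteq> sources G P" using sources_mono[OF QP(1)] .
  have H5: "\<forall>h\<in>P-Q. lab G h = Bang \<longrightarrow> ibox G h \<subseteq> P-Q"
    unfolding QP(2) B_def using fb_closed[OF pP fb] by blast
  have "subnet G Q P"
  proof (rule removal[OF P QP(1), of "root G P"])
    show "\<forall>k\<in>Q. \<forall>v\<in>set (src G k). \<exists>t\<in>Q. v \<in> set (tgt G t)"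
    proof (intro ballI)
      fix k v assume k: "k \<in> Q" "v \<in> set (src G k)"
      have kP: "k \<in> P" using k QP by blast
      have kB: "k \<notin> ibox G l" "k \<noteq> l" using k memQ by auto
      obtain t' where t': "t' \<in> P" "v \<in> set (tgt G t')"
        using hg_tgt_ex[OF hg in_nodes_src[OF kP k(2)]] by blast
      have "t' \<noteq> l" using t' bang_shape[OF hg_link_ok[OF hg F(1)] F(2)] by auto
      moreover have "t' \<notin> ibox G l"
      proof
        assume "t' \<in> ibox G l"
        hence "v \<in> nodes G (ibox G l)" using in_nodes_tgt[of t' "ibox G l" v G] t'(2) by blast
        thus False using fb_node[OF pP fb kP kB(1,2) k(2)] by simp
      qed
      hence "t' \<in> Q" using t' \<open>t' \<noteq> l\<close> memQ by simp
      thus "\<exists>t\<in>Q. v \<in> set (tgt G t)" using t' by blast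
    qed
    show "term_m G Q = {root G P}"
    proof -
      have rn: "root G P \<in> nodes G Q" using in_nodes_tgt[OF t0Q t0(2)] .
      have "root G P \<notin> sources G Q" using root_facts(2)[OF P] sQ by blast
      hence "root G P \<in> term_m G Q"
        unfolding term_m_def terminal_def using rn root_facts(1)[OF P] by simp
      moreover have "v = root G P" if "v \<in> term_m G Q" for v
      proof -
        have v: "v \<in> nodes G Q" "v \<notin> sources G Q" "ntyp G v = Mty"
          using that unfolding term_m_def terminal_def by auto
        have vP: "v \<in> nodes G P" using nodes_mono[OF QP(1), of G] v(1) by blast
        show ?thesis
        proof (cases "v \<in> sources G P")
          case True
          then obtain k where k: "k \<in> P" "v \<in> set (src G k)" unfolding sources_def by blast
          have "k \<notin> Q" using k v(2) in_sources[of k Q v G] by blast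
          hence kB: "k \<in> B" using k QP by blast
          hence kB': "k \<in> insert l (ibox G l)" using memB by simp
          obtain t where t: "t \<in> ibox G l" "v \<in> set (tgt G t)"
            using fb_src_targeted[OF pP fb kB' k(2) v(3)] by blast
          have "t \<in> P - Q" using t QP memB by simp
          moreover have "k \<in> P - Q" using kB QP by simp
          ultimately have False using removed_M[OF hg QP(1) v(1) v(3) _ k(2) _ t(2)] by blast
          thus ?thesis ..
        next
          case False
          hence "v \<in> term_m G P" using vP v(3) unfolding term_m_def terminal_def by simp
          thus ?thesis using hg_term_m[OF hg] by simp
        qed
      qed
      ultimately show ?thesis by blast
    qed
    show "\<forall>h\<in>Q. lab G h = Bang \<longrightarrow> ibox G h \<subseteq> Q"
    proof (intro ballI impI)
      fix h assume h: "h \<in> Q" "lab G h = Bang"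
      have hP: "h \<in> P" using h memQ by auto
      have "h \<notin> insert l (ibox G l)" using h memQ by auto
      hence "ibox G h \<inter> insert l (ibox G l) = {}" using fb_avoid[OF pP fb hP(1) _ h(2)] by blast
      moreover have "ibox G h \<subseteq> P" using box_sub[OF pP hP(1) h(2)] .
      ultimately show "ibox G h \<subseteq> Q" using memQ by blast
    qed
    show "\<forall>h\<in>P-Q. lab G h = Bang \<longrightarrow> ibox G h \<subseteq> P-Q" by fact
    show "corr_term_m G Q = {root G P}"
    proof -
      have "root G P \<in> corr_term_m G Q"
        using corr_term_in[OF P QP(1) H5 root_facts(1)[OF P] _ t0Q t0l t0(2)]
          root_facts(2)[OF P] sQ by blast
      moreover have "v = root G P" if "v \<in> corr_term_m G Q" for v
      proof -
        have "\<not> (\<exists>k\<in>P-Q. level0 G P k \<and> lab G k \<noteq> Bang)"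
        proof
          assume "\<exists>k\<in>P-Q. level0 G P k \<and> lab G k \<noteq> Bang"
          then obtain k where k: "k \<in> B" "level0 G P k" "lab G k \<noteq> Bang" using QP by blast
          have "k \<noteq> l" using k F(2) by auto
          hence "k \<in> ibox G l" using k memB by simp
          thus False using k(2) F(1,2) unfolding level0_def by blast
        qed
        thus ?thesis using corr_term_char[OF P QP(1) H5 that] by blast
      qed
      ultimately show ?thesis by blast
    qed
    show "\<forall>k\<in>P. \<forall>v\<in>set (tgt G k). v \<in> internal G Q \<and> ntyp G v = Ety \<longrightarrow> k \<in> Q"
    proof (intro ballI impI)
      fix k v assume k: "k \<in> P" "v \<in> set (tgt G k)" "v \<in> internal G Q \<and> ntyp G v = Ety"
      show "k \<in> Q"
      proof (rule ccontr)
        assume "k \<notin> Q"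
        hence kB: "k \<in> B" using k QP by blast
        have "k \<noteq> l" using k(2) bang_shape[OF hg_link_ok[OF hg F(1)] F(2)] by auto
        hence kb: "k \<in> ibox G l" using kB memB by simp
        have "v \<in> sources G Q" using k(3) internal_sub[of G Q] by blast
        then obtain k' where k': "k' \<in> Q" "v \<in> set (src G k')" unfolding sources_def by blast
        have "k' \<in> P" "k' \<notin> ibox G l" "k' \<noteq> l" using k' memQ by auto
        moreover have "v \<in> nodes G (ibox G l)" using in_nodes_tgt[OF kb k(2)] .
        ultimately show False using fb_node[OF pP fb _ _ _ k'(2)] by blast
      qed
    qed
    show "\<forall>h\<in>P. lab G h = Bang \<and> fv G (ibox G h) \<inter> internal G Q \<noteq> {} \<longrightarrow> ibox G h \<subseteq> Q"
    proof (intro ballI impI)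
      fix h assume h: "h \<in> P" "lab G h = Bang \<and> fv G (ibox G h) \<inter> internal G Q \<noteq> {}"
      then obtain v where v: "v \<in> fv G (ibox G h)" "v \<in> internal G Q" by blast
      have vs: "v \<in> sources G Q" using v(2) internal_sub[of G Q] by blast
      then obtain k' where k': "k' \<in> Q" "v \<in> set (src G k')" unfolding sources_def by blast
      have k'P: "k' \<in> P" "k' \<notin> ibox G l" "k' \<noteq> l" using k' memQ by auto
      show "ibox G h \<subseteq> Q"
      proof (cases "h \<in> B")
        case False
        have "h \<notin> insert l (ibox G l)" using False memB by simp
        hence "ibox G h \<inter> insert l (ibox G l) = {}" using fb_avoid[OF pP fb h(1) _] h(2) by blast
        moreover have "ibox G h \<subseteq> P" using box_sub[OF pP h(1)] h(2) by blast
        ultimately show ?thesis using memQ by blast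
      next
        case True
        show ?thesis
        proof (cases "h = l")
          case True
          hence "v \<in> fv G P" using v(1) F(4) by blast
          hence "v \<notin> sources G P" unfolding fv_def terminal_def by blast
          thus ?thesis using vs sQ by blast
        next
          case False
          hence hb: "h \<in> ibox G l" using True memB by simp
          have "ibox G h \<subseteq> insert l (ibox G l)" using fb_closed[OF pP fb _ ] hb h(2) by blast
          moreover have "l \<notin> ibox G h" using F(3) h unfolding level0_def by blast
          ultimately have "ibox G h \<subseteq> ibox G l" by blast
          moreover have "v \<in> nodes G (ibox G h)" using v(1) unfolding fv_def terminal_def by blast
          ultimately have "v \<in> nodes G (ibox G l)" using nodes_mono[of "ibox G h" "ibox G l" G] by blast
          hence False using fb_node[OF pP fb k'P k'(2)] by simp
          thus ?thesis ..
        qed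
      qed
    qed
  qed
  thus ?thesis unfolding Q_def B_def by simp
qed

lemma part4:
  assumes P: "correct G P" and rl: "root_link G P l" and lt: "lab G l = Tens" and hP: "h \<in> P"
    and fb: "free_bang G P h" and ea: "bang_enode G h = tens_enode G l"
  shows "subnet G (P - ({l, h} \<union> ibox G h)) P"
proof -
  define R where "R = insert l (insert h (ibox G h))"
  define Q where "Q = P - R"
  have pP: "prenet G P" using correct_prenet[OF P] .
  have hg: "hg_ok G P" using prenet_hg[OF pP] .
  note F = fb_basic[OF pP fb]
  have lP: "l \<in> P" and rt: "root G P \<in> set (tgt G l)" using rl unfolding root_link_def by auto
  define a where "a = tens_enode G l"
  obtain f r where sh: "src G l = [f]" "tgt G l = [r, a]" "ntyp G f = Mty" "ntyp G r = Mty"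
     "ntyp G a = Ety" "distinct [f,r,a]"
    using tens_shape[OF hg_link_ok[OF hg lP] lt] a_def by blast
  have rr: "r = root G P" using rt sh root_facts(1)[OF P] by auto
  have lev: "level0 G P l" using root_link_level0[OF P lP rt] by blast
  have lh: "l \<noteq> h" "l \<notin> ibox G h" using lt F(2) lev F(1) unfolding level0_def by auto
  have lkh: "link_ok G h" using hg_link_ok[OF hg F(1)] .
  have ash: "a \<in> set (src G h)" "tgt G h = []" using bang_shape[OF lkh F(2)] ea a_def
    by (metis list.set_intros(1,2))+
  have memQ: "\<And>x. x \<in> Q \<longleftrightarrow> x \<in> P \<and> x \<noteq> l \<and> x \<noteq> h \<and> x \<notin> ibox G h"
    by (auto simp: Q_def R_def)
  have memR: "\<And>x. x \<in> R \<longleftrightarrow> x = l \<or> x = h \<or> x \<in> ibox G h" by (simp add: R_def)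
  have RP: "R \<subseteq> P" unfolding R_def using F(1,5) lP by simp
  have QP: "Q \<subseteq> P" "P - Q = R" unfolding Q_def using RP by auto
  have sQ: "sources G Q \<subseteq> sources G P" using sources_mono[OF QP(1)] .
  have rns: "r \<notin> sources G P" using root_facts(2)[OF P] rr by simp
  have rnQ: "r \<notin> nodes G Q"
  proof
    assume "r \<in> nodes G Q"
    then obtain k where k: "k \<in> Q" "r \<in> set (src G k) \<or> r \<in> set (tgt G k)" unfolding nodes_def by blast
    have kP: "k \<in> P" using k memQ by blast
    show False
    proof (cases "r \<in> set (src G k)")
      case True thus False using in_sources[OF kP True] rns by blast
    next
      case False
      hence "r \<in> set (tgt G k)" using k by blast
      moreover have "r \<in> set (tgt G l)" using sh by simp
      ultimately have "k = l" using hg_tgt_uniq[OF hg sh(4) kP lP] by blast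
      thus False using k memQ by blast
    qed
  qed
  have "f \<in> nodes G P" using in_nodes_src[OF lP, of f G] sh by simp
  then obtain t where t: "t \<in> P" "f \<in> set (tgt G t)" using hg_tgt_ex[OF hg] by blast
  have tl: "t \<noteq> l" using t sh by auto
  have tlev: "level0 G P t"
  proof (rule level0_by_tgt[OF pP t sh(3)])
    show "\<forall>k\<in>P. f \<in> set (src G k) \<longrightarrow> level0 G P k \<and> lab G k \<noteq> Bang"
    proof (intro ballI impI)
      fix k assume "k \<in> P" "f \<in> set (src G k)"
      hence "k = l" using hg_src_uniq[OF hg, of k l f] lP sh by simp
      thus "level0 G P k \<and> lab G k \<noteq> Bang" using lev lt by simp
    qed
  qed
  have tnb: "lab G t \<noteq> Bang"
  proof
    assume "lab G t = Bang"
    hence "tgt G t = []" using bang_shape[OF hg_link_ok[OF hg t(1)]] by blast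
    thus False using t(2) by simp
  qed
  have tQ: "t \<in> Q"
  proof -
    have "t \<noteq> h" using tnb F(2) by auto
    moreover have "t \<notin> ibox G h" using tlev F(1,2) unfolding level0_def by blast
    ultimately show ?thesis using t tl memQ by simp
  qed
  have fnsQ: "f \<notin> sources G Q"
  proof
    assume "f \<in> sources G Q"
    then obtain k where k: "k \<in> Q" "f \<in> set (src G k)" unfolding sources_def by blast
    have "k \<in> P" using k memQ by blast
    hence "k = l" using hg_src_uniq[OF hg _ lP k(2)] sh by simp
    thus False using k memQ by blast
  qed
  have H5: "\<forall>x\<in>P-Q. lab G x = Bang \<longrightarrow> ibox G x \<subseteq> P-Q"
  proof (intro ballI impI)
    fix x assume x: "x \<in> P - Q" "lab G x = Bang"
    hence "x \<in> insert h (ibox G h)" using QP(2) memR lt by auto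
    hence "ibox G x \<subseteq> insert h (ibox G h)" using fb_closed[OF pP fb _ x(2)] by blast
    thus "ibox G x \<subseteq> P - Q" unfolding QP(2) R_def by blast
  qed
  have "subnet G Q P"
  proof (rule removal[OF P QP(1), of f])
    show "\<forall>k\<in>Q. \<forall>v\<in>set (src G k). \<exists>t\<in>Q. v \<in> set (tgt G t)"
    proof (intro ballI)
      fix k v assume k: "k \<in> Q" "v \<in> set (src G k)"
      have kP: "k \<in> P" and kB: "k \<notin> ibox G h" "k \<noteq> h" "k \<noteq> l" using k memQ by auto
      obtain t' where t': "t' \<in> P" "v \<in> set (tgt G t')"
        using hg_tgt_ex[OF hg in_nodes_src[OF kP k(2)]] by blast
      have "t' \<noteq> l"
      proof
        assume "t' = l"
        hence "v = r \<or> v = a" using t' sh by auto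
        thus False
        proof
          assume "v = r" thus False using in_sources[OF kP k(2)] rns by simp
        next
          assume "v = a"
          hence "k = h" using hg_src_uniq[OF hg kP F(1) k(2)] ash by simp
          thus False using kB by simp
        qed
      qed
      moreover have "t' \<noteq> h" using t' ash by auto
      moreover have "t' \<notin> ibox G h"
      proof
        assume "t' \<in> ibox G h"
        hence "v \<in> nodes G (ibox G h)" using in_nodes_tgt[of t' "ibox G h" v G] t'(2) by blast
        thus False using fb_node[OF pP fb kP kB(1,2) k(2)] by simp
      qed
      ultimately have "t' \<in> Q" using t' memQ by simp
      thus "\<exists>t\<in>Q. v \<in> set (tgt G t)" using t' by blast
    qed
    show "term_m G Q = {f}"
    proof -
      have fn: "f \<in> nodes G Q" using in_nodes_tgt[OF tQ t(2)] .
      hence "f \<in> term_m G Q"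
        unfolding term_m_def terminal_def using fnsQ sh by simp
      moreover have "v = f" if "v \<in> term_m G Q" for v
      proof -
        have v: "v \<in> nodes G Q" "v \<notin> sources G Q" "ntyp G v = Mty"
          using that unfolding term_m_def terminal_def by auto
        have vP: "v \<in> nodes G P" using nodes_mono[OF QP(1), of G] v(1) by blast
        show ?thesis
        proof (cases "v \<in> sources G P")
          case True
          then obtain k where k: "k \<in> P" "v \<in> set (src G k)" unfolding sources_def by blast
          have "k \<notin> Q" using k v(2) in_sources[of k Q v G] by blast
          hence kR: "k \<in> R" using k QP by blast
          show ?thesis
          proof (cases "k = l")
            case True thus ?thesis using k sh by simp
          next
            case False
            hence kB': "k \<in> insert h (ibox G h)" using kR memR by simp
            obtain t where t: "t \<in> ibox G h" "v \<in> set (tgt G t)"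
              using fb_src_targeted[OF pP fb kB' k(2) v(3)] by blast
            have "t \<in> P - Q" using t QP memR by simp
            moreover have "k \<in> P - Q" using kR QP by simp
            ultimately have False using removed_M[OF hg QP(1) v(1) v(3) _ k(2) _ t(2)] by blast
            thus ?thesis ..
          qed
        next
          case False
          hence "v \<in> term_m G P" using vP v(3) unfolding term_m_def terminal_def by simp
          hence "v = r" using hg_term_m[OF hg] rr by simp
          thus ?thesis using v(1) rnQ by simp
        qed
      qed
      ultimately show ?thesis by blast
    qed
    show "\<forall>x\<in>Q. lab G x = Bang \<longrightarrow> ibox G x \<subseteq> Q"
    proof (intro ballI impI)
      fix x assume x: "x \<in> Q" "lab G x = Bang"
      have xP: "x \<in> P" using x memQ by auto
      have "x \<notin> insert h (ibox G h)" using x memQ by auto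
      hence "ibox G x \<inter> insert h (ibox G h) = {}" using fb_avoid[OF pP fb xP _ x(2)] by blast
      moreover have "ibox G x \<subseteq> P" using box_sub[OF pP xP x(2)] .
      moreover have "l \<notin> ibox G x" using lev xP x(2) unfolding level0_def by blast
      ultimately show "ibox G x \<subseteq> Q" using memQ by blast
    qed
    show "\<forall>x\<in>P-Q. lab G x = Bang \<longrightarrow> ibox G x \<subseteq> P-Q" by fact
    show "corr_term_m G Q = {f}"
    proof -
      have "f \<in> corr_term_m G Q"
        using corr_term_in[OF P QP(1) H5 sh(3) fnsQ tQ tlev tnb t(2)] .
      moreover have "v = f" if vin: "v \<in> corr_term_m G Q" for v
      proof -
        have vM: "ntyp G v = Mty" and vc: "v \<in> corr_nodes G Q"
          using vin unfolding corr_term_m_def by auto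
        have "v \<in> nodes G Q" using corr_nodes_M[OF hg QP(1) vc vM] .
        hence "v \<noteq> root G P" using rnQ rr by auto
        then obtain k where k: "k \<in> P - Q" "level0 G P k" "lab G k \<noteq> Bang" "v \<in> set (src G k)"
          using corr_term_char[OF P QP(1) H5 vin] by blast
        have "k \<noteq> h" using k F(2) by auto
        moreover have "k \<notin> ibox G h" using k(2) F(1,2) unfolding level0_def by blast
        ultimately have "k = l" using k(1) QP(2) memR by simp
        thus ?thesis using k(4) sh by simp
      qed
      ultimately show ?thesis by blast
    qed
    show "\<forall>k\<in>P. \<forall>v\<in>set (tgt G k). v \<in> internal G Q \<and> ntyp G v = Ety \<longrightarrow> k \<in> Q"
    proof (intro ballI impI)
      fix k v assume k: "k \<in> P" "v \<in> set (tgt G k)" "v \<in> internal G Q \<and> ntyp G v = Ety"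
      have "v \<in> sources G Q" using k(3) internal_sub[of G Q] by blast
      then obtain k' where k': "k' \<in> Q" "v \<in> set (src G k')" unfolding sources_def by blast
      have k'P: "k' \<in> P" "k' \<notin> ibox G h" "k' \<noteq> h" using k' memQ by auto
      show "k \<in> Q"
      proof (rule ccontr)
        assume "k \<notin> Q"
        hence kR: "k = l \<or> k = h \<or> k \<in> ibox G h" using k memQ by auto
        show False
        proof (cases "k = l")
          case True
          hence "v = a" using k(2,3) sh by auto
          hence "k' = h" using hg_src_uniq[OF hg k'P(1) F(1) k'(2)] ash by simp
          thus False using k'P by simp
        next
          case False
          have "k \<noteq> h" using k(2) ash by auto
          hence kb: "k \<in> ibox G h" using kR False by simp
          have "v \<in> nodes G (ibox G h)" using in_nodes_tgt[OF kb k(2)] .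
          thus False using fb_node[OF pP fb k'P k'(2)] by simp
        qed
      qed
    qed
    show "\<forall>x\<in>P. lab G x = Bang \<and> fv G (ibox G x) \<inter> internal G Q \<noteq> {} \<longrightarrow> ibox G x \<subseteq> Q"
    proof (intro ballI impI)
      fix x assume x: "x \<in> P" "lab G x = Bang \<and> fv G (ibox G x) \<inter> internal G Q \<noteq> {}"
      then obtain v where v: "v \<in> fv G (ibox G x)" "v \<in> internal G Q" by blast
      have vs: "v \<in> sources G Q" using v(2) internal_sub[of G Q] by blast
      then obtain k' where k': "k' \<in> Q" "v \<in> set (src G k')" unfolding sources_def by blast
      have k'P: "k' \<in> P" "k' \<notin> ibox G h" "k' \<noteq> h" using k' memQ by auto
      have xB: "lab G x = Bang" using x by blast
      show "ibox G x \<subseteq> Q"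
      proof (cases "x \<in> insert h (ibox G h)")
        case False
        hence "ibox G x \<inter> insert h (ibox G h) = {}" using fb_avoid[OF pP fb x(1) _ xB] by blast
        moreover have "ibox G x \<subseteq> P" using box_sub[OF pP x(1) xB] .
        moreover have "l \<notin> ibox G x" using lev x(1) xB unfolding level0_def by blast
        ultimately show ?thesis using memQ by blast
      next
        case True
        show ?thesis
        proof (cases "x = h")
          case True
          hence "v \<in> fv G P" using v(1) F(4) by blast
          hence "v \<notin> sources G P" unfolding fv_def terminal_def by blast
          thus ?thesis using vs sQ by blast
        next
          case False
          hence hb: "x \<in> ibox G h" using True by simp
          have "ibox G x \<subseteq> insert h (ibox G h)" using fb_closed[OF pP fb _ xB] hb by blast
          moreover have "h \<notin> ibox G x" using F(3) x(1) xB unfolding level0_def by blast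
          ultimately have "ibox G x \<subseteq> ibox G h" by blast
          moreover have "v \<in> nodes G (ibox G x)" using v(1) unfolding fv_def terminal_def by blast
          ultimately have "v \<in> nodes G (ibox G h)" using nodes_mono[of "ibox G x" "ibox G h" G] by blast
          hence False using fb_node[OF pP fb k'P k'(2)] by simp
          thus ?thesis ..
        qed
      qed
    qed
  qed
  thus ?thesis unfolding Q_def R_def by (simp add: insert_commute)
qed

theorem lemma2:
  fixes G :: "('n, 'l) hg" and P :: "'l set"
  assumes "correct G P"
  shows "(\<forall>l. free_weakening G P l \<longrightarrow> subnet G (P - {l}) P)
       \<and> (\<forall>l. root_link G P l \<and> lab G l = Par \<longrightarrow> subnet G (P - {l}) P)
       \<and> (\<forall>l. free_bang G P l \<and> is_substitution G P l \<longrightarrow> subnet G (P - ({l} \<union> ibox G l)) P)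
       \<and> (\<forall>l h. root_link G P l \<and> lab G l = Tens \<and> h \<in> P \<and> free_bang G P h
                \<and> bang_enode G h = tens_enode G l
                \<longrightarrow> subnet G (P - ({l, h} \<union> ibox G h)) P)"
  using part1[OF assms] part2[OF assms] part3[OF assms] part4[OF assms] by blast

end
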